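(* For every message $M$ and all formulas $\phi,\psi$: $\vdash[M](\phi\to\psi)\to([M]\phi\to[M]\psi)$; $\vdash[M]\phi\to\langle M\rangle\phi$; $\vdash[M]\phi\to[M][M]\phi$; $\vdash\neg[M]\phi\to[M]\neg[M]\phi$; $\vdash[M]\big([M](\phi\vee\psi)\to([M]\phi\vee[M]\psi)\big)$; $\vdash\phi\to[M]\phi$; and if $\vdash\phi$ then $\vdash[M]\phi$. (That is, $[M]$ is a disjunctive KD45-modality of explicit belief of the agent $\mathsf{CM}$, with $\mathsf{CM}$ truth-believing.)
   Context: Fix a finite set $\mathcal{A}$ of agent names containing a distinguished name $\mathsf{CM}$. Messages: $M ::= a \mid B \mid (M,M)$ with $a\in\mathcal{A}$, $B$ optional application-specific data constants, $(M,M')$ pairs. $\mathcal{P}$ is a denumerable set of propositional variables containing atoms $\mathsf{k}_a(M)$ for all $a\in\mathcal{A}$ and messages $M$. Formulas: $\phi ::= P \mid \phi\wedge\phi \mid \phi\vee\phi \mid \neg\phi \mid \phi\to\phi \mid [M]\phi$. Abbreviations: $\mathrm{true}:=\mathsf{k}_{\mathsf{CM}}(\mathsf{CM})$, $\mathrm{false}:=\neg\mathrm{true}$, $\phi\leftrightarrow\psi:=(\phi\to\psi)\wedge(\psi\to\phi)$, $\langle M\rangle\phi:=\neg\neg(\mathsf{k}_{\mathsf{CM}}(M)\wedge\phi)$. LIiP is the smallest set of formulas that contains all instances of: the axioms of an adequate Hilbert axiomatization of intuitionistic propositional logic; $\mathsf{k}_a(a)$; $(\mathsf{k}_a(M)\wedge\mathsf{k}_a(M'))\leftrightarrow\mathsf{k}_a((M,M'))$;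 $[M]\mathsf{k}_{\mathsf{CM}}(M)$; $[M](\phi\to\psi)\to([M]\phi\to[M]\psi)$; $[M]\phi\to(\mathsf{k}_{\mathsf{CM}}(M)\to\phi)$; $[M]\phi\to\langle M\rangle\phi$; $\phi\to[M]\phi$; and is closed under modus ponens and the rule: if $\mathsf{k}_{\mathsf{CM}}(M)\to\mathsf{k}_{\mathsf{CM}}(M')$ is in the set then so is $[M']\phi\to[M]\phi$ for every $\phi$. Write $\vdash\phi$ for $\phi\in\mathrm{LIiP}$. *)

theory Defs
  imports Main
begin

datatype ('a, 'b) msg = Ag 'a | Dat 'b | MPair "('a,'b) msg" "('a,'b) msg"

(* Propositional variables: the atoms k_a(M), plus denumerably many further ones *)
datatype ('a, 'b) pvar = Know 'a "('a,'b) msg" | PV nat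

datatype ('a, 'b) form =
    Atom "('a,'b) pvar"
  | Conj "('a,'b) form" "('a,'b) form"
  | Disj "('a,'b) form" "('a,'b) form"
  | Neg "('a,'b) form"
  | Imp "('a,'b) form" "('a,'b) form"
  | Box "('a,'b) msg" "('a,'b) form"

definition kn :: "'a \<Rightarrow> ('a,'b) msg \<Rightarrow> ('a,'b) form" where
  "kn a M = Atom (Know a M)"

definition Iff :: "('a,'b) form \<Rightarrow> ('a,'b) form \<Rightarrow> ('a,'b) form" where
  "Iff p q = Conj (Imp p q) (Imp q p)"

(* <M> phi := not not (k_CM(M) and phi); cm is the distinguished agent CM *)
definition Dia :: "'a \<Rightarrow> ('a,'b) msg \<Rightarrow> ('a,'b) form \<Rightarrow> ('a,'b) form" where
  "Dia cm M p = Neg (Neg (Conj (kn cm M) p))"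

(* LIiP, parametrised by the distinguished agent name cm = CM.
   Intuitionistic propositional part: Kleene's Hilbert system (negation primitive). *)
inductive LIiP :: "'a \<Rightarrow> ('a,'b) form \<Rightarrow> bool" for cm :: 'a where
  ipc1: "LIiP cm (Imp p (Imp q p))"
| ipc2: "LIiP cm (Imp (Imp p q) (Imp (Imp p (Imp q r)) (Imp p r)))"
| ipc3: "LIiP cm (Imp p (Imp q (Conj p q)))"
| ipc4: "LIiP cm (Imp (Conj p q) p)"
| ipc5: "LIiP cm (Imp (Conj p q) q)"
| ipc6: "LIiP cm (Imp p (Disj p q))"
| ipc7: "LIiP cm (Imp q (Disj p q))"
| ipc8: "LIiP cm (Imp (Imp p r) (Imp (Imp q r) (Imp (Disj p q) r)))"
| ipc9: "LIiP cm (Imp (Imp p q) (Imp (Imp p (Neg q)) (Neg p)))"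
| ipc10: "LIiP cm (Imp (Neg p) (Imp p q))"
| self: "LIiP cm (kn a (Ag a))"
| pair: "LIiP cm (Iff (Conj (kn a M) (kn a M')) (kn a (MPair M M')))"
| box_self: "LIiP cm (Box M (kn cm M))"
| box_K: "LIiP cm (Imp (Box M (Imp p q)) (Imp (Box M p) (Box M q)))"
| box_T: "LIiP cm (Imp (Box M p) (Imp (kn cm M) p))"
| box_D: "LIiP cm (Imp (Box M p) (Dia cm M p))"
| box_triv: "LIiP cm (Imp p (Box M p))"
| mp: "LIiP cm (Imp p q) \<Longrightarrow> LIiP cm p \<Longrightarrow> LIiP cm q"
| epi: "LIiP cm (Imp (kn cm M) (kn cm M')) \<Longrightarrow> LIiP cm (Imp (Box M' p) (Box M p))"

end

theory Submission
  imports Defs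
begin

lemma lift: "LIiP cm q \<Longrightarrow> LIiP cm (Imp p q)"
  by (rule LIiP.mp[OF LIiP.ipc1])

lemma smp: "LIiP cm (Imp p (Imp q r)) \<Longrightarrow> LIiP cm (Imp p q) \<Longrightarrow> LIiP cm (Imp p r)"
  by (rule LIiP.mp[OF LIiP.mp[OF LIiP.ipc2]])

lemma S2: "LIiP cm (Imp a (Imp p (Imp q r))) \<Longrightarrow> LIiP cm (Imp a (Imp p q)) \<Longrightarrow> LIiP cm (Imp a (Imp p r))"
proof -
  assume h1: "LIiP cm (Imp a (Imp p (Imp q r)))" and h2: "LIiP cm (Imp a (Imp p q))"
  have "LIiP cm (Imp a (Imp (Imp p q) (Imp (Imp p (Imp q r)) (Imp p r))))"
    by (rule lift[OF LIiP.ipc2])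
  hence "LIiP cm (Imp a (Imp (Imp p (Imp q r)) (Imp p r)))" using h2 by (rule smp)
  thus ?thesis using h1 by (rule smp)
qed

lemma trans: "LIiP cm (Imp p q) \<Longrightarrow> LIiP cm (Imp q r) \<Longrightarrow> LIiP cm (Imp p r)"
  by (rule smp[OF lift])

lemma swap: "LIiP cm (Imp p (Imp q r)) \<Longrightarrow> LIiP cm (Imp q (Imp p r))"
  by (rule S2[OF lift LIiP.ipc1])

lemma item5:
  "LIiP cm (Box M (Imp (Box M (Disj \<phi> \<psi>)) (Disj (Box M \<phi>) (Box M \<psi>))))"
proof -
  let ?k = "kn cm M" and ?d = "Disj \<phi> \<psi>" and ?X = "Disj (Box M \<phi>) (Box M \<psi>)"
  have a: "LIiP cm (Imp \<phi> ?X)" by (rule trans[OF LIiP.box_triv LIiP.ipc6])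
  have b: "LIiP cm (Imp \<psi> ?X)" by (rule trans[OF LIiP.box_triv LIiP.ipc7])
  have dX: "LIiP cm (Imp ?d ?X)" by (rule LIiP.mp[OF LIiP.mp[OF LIiP.ipc8 a] b])
  have "LIiP cm (Imp (Box M ?d) (Imp ?k ?X))"
    by (rule S2[OF lift[OF lift[OF dX]] LIiP.box_T])
  hence k: "LIiP cm (Imp ?k (Imp (Box M ?d) ?X))" by (rule swap)
  have "LIiP cm (Box M (Imp ?k (Imp (Box M ?d) ?X)))" by (rule LIiP.mp[OF LIiP.box_triv k])
  hence "LIiP cm (Imp (Box M ?k) (Box M (Imp (Box M ?d) ?X)))" by (rule LIiP.mp[OF LIiP.box_K])
  thus ?thesis by (rule LIiP.mp[OF _ LIiP.box_self])
qed

theorem corollary5: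
  fixes cm :: "'a::finite" and M :: "('a,'b) msg" and \<phi> \<psi> :: "('a,'b) form"
  shows "LIiP cm (Imp (Box M (Imp \<phi> \<psi>)) (Imp (Box M \<phi>) (Box M \<psi>)))
       \<and> LIiP cm (Imp (Box M \<phi>) (Dia cm M \<phi>))
       \<and> LIiP cm (Imp (Box M \<phi>) (Box M (Box M \<phi>)))
       \<and> LIiP cm (Imp (Neg (Box M \<phi>)) (Box M (Neg (Box M \<phi>))))
       \<and> LIiP cm (Box M (Imp (Box M (Disj \<phi> \<psi>)) (Disj (Box M \<phi>) (Box M \<psi>))))
       \<and> LIiP cm (Imp \<phi> (Box M \<phi>))
       \<and> (LIiP cm \<phi> \<longrightarrow> LIiP cm (Box M \<phi>))"
  apply (intro conjI impI)
  apply (rule LIiP.box_K)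
  apply (rule LIiP.box_D)
  apply (rule LIiP.box_triv)
  apply (rule LIiP.box_triv)
  apply (rule item5)
  apply (rule LIiP.box_triv)
  apply (erule LIiP.mp[OF LIiP.box_triv])
  done

end
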